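(* Let $P,R,Q$ be polytopes with $R\subset Q$, and let $m\ge2$. (a) If $f\in\operatorname{vert}(P,Q)$ and $f(P)\subset R$, then $f\in\operatorname{vert}(P,R)$. (b) If $P$ is centrally symmetric, $f\in\operatorname{vert}(\Diamond_m,P)$ and $f(0)$ is the center of $P$, then $f(\operatorname{vert}(\Diamond_m))\subset\operatorname{vert}(P)$. (c) If $f\in\operatorname{vert}(\Diamond_m,P)$, then $f(\operatorname{vert}(\Diamond_m))=\operatorname{vert}(f(\Diamond_m))\subset\operatorname{vert}\big(P\cap(2f(0)-P)\big)$.
   Context: For convex polytopes $P,Q$, $\operatorname{Hom}(P,Q)$ is the set of maps $P\to Q$ that are restrictions of affine maps $\operatorname{Aff}(P)\to\operatorname{Aff}(Q)$; it is a convex polytope in the affine space of affine maps $\operatorname{Aff}(P)\to\operatorname{Aff}(Q)$, and $\operatorname{vert}(P,Q)$ denotes its set of vertices. $\operatorname{vert}(X)$ denotes the vertex set of a polytope $X$. $\Diamond_m=\operatorname{conv}(\pm e_1,\ldots,\pm e_m)\subset\mathbb{R}^m$, and $2f(0)-P=\{2f(0)-x:x\in P\}$. *)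

theory Defs
  imports "HOL-Analysis.Analysis"
begin

definition affine_map :: "('a::real_vector \<Rightarrow> 'b::real_vector) \<Rightarrow> bool" where
  "affine_map f \<longleftrightarrow> (\<exists>g b. linear g \<and> (\<forall>x. f x = g x + b))"

text \<open>Hom(P,Q): affine maps sending P into Q.  Two such maps represent the same
  element of Hom(P,Q) iff they agree on P (hence on Aff(P)).\<close>
definition hom_maps :: "'a::real_vector set \<Rightarrow> 'b::real_vector set \<Rightarrow> ('a \<Rightarrow> 'b) set" where
  "hom_maps P Q = {f. affine_map f \<and> f ` P \<subseteq> Q}"

definition vert_hom :: "'a::real_vector set \<Rightarrow> 'b::real_vector set \<Rightarrow> ('a \<Rightarrow> 'b) set" where
  "vert_hom P Q = {f. f \<in> hom_maps P Q \<and>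
     (\<forall>g\<in>hom_maps P Q. \<forall>h\<in>hom_maps P Q. \<forall>u::real. 0 < u \<and> u < 1 \<and>
        (\<forall>x\<in>P. f x = (1 - u) *\<^sub>R g x + u *\<^sub>R h x) \<longrightarrow> (\<forall>x\<in>P. g x = h x))}"

definition vert :: "'a::real_vector set \<Rightarrow> 'a set" where
  "vert X = {x. x extreme_point_of X}"

definition diamond :: "(real^'m) set" where
  "diamond = convex hull ((\<lambda>i. axis i 1) ` UNIV \<union> (\<lambda>i. - axis i 1) ` UNIV)"

definition centrally_symmetric_about :: "'a::real_vector \<Rightarrow> 'a set \<Rightarrow> bool" where
  "centrally_symmetric_about c P \<longleftrightarrow> (\<forall>x\<in>P. 2 *\<^sub>R c - x \<in> P)"

end

theory Submission
  imports Defs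
begin
lemma affine_map_decomp:
  assumes "affine_map f" shows "\<exists>g. linear g \<and> (\<forall>x. f x = g x + f 0)"
proof -
  obtain g b where g: "linear g" "\<forall>x. f x = g x + b" using assms unfolding affine_map_def by blast
  have "g 0 = 0" by (rule linear_0[OF g(1)])
  then have "f 0 = b" using g(2) by simp
  then have "\<forall>x. f x = g x + f 0" using g(2) by simp
  thus ?thesis using g(1) by blast
qed

lemma affine_map_pert:
  fixes f :: "real^'m \<Rightarrow> 'a::real_vector"
  assumes "affine_map f" shows "affine_map (\<lambda>x. f x + (x$i) *\<^sub>R d)"
proof -
  obtain g where g: "linear g" "\<forall>x. f x = g x + f 0" using affine_map_decomp[OF assms] by blast
  have lin: "linear (\<lambda>x. g x + (x$i) *\<^sub>R d)"
  proof (rule linearI)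
    fix x y :: "real^'m" and c :: real
    have "g (x + y) = g x + g y" by (rule linear_add[OF g(1)])
    moreover have "(x + y) $ i *\<^sub>R d = x $ i *\<^sub>R d + y $ i *\<^sub>R d" by (simp add: scaleR_add_left)
    ultimately show "g (x + y) + (x + y) $ i *\<^sub>R d = g x + x $ i *\<^sub>R d + (g y + y $ i *\<^sub>R d)"
      by (simp only: add_ac)
    have "g (c *\<^sub>R x) = c *\<^sub>R g x" by (rule linear_scale[OF g(1)])
    then show "g (c *\<^sub>R x) + (c *\<^sub>R x) $ i *\<^sub>R d = c *\<^sub>R (g x + x $ i *\<^sub>R d)"
      by (simp add: scaleR_add_right)
  qed
  have eq: "\<forall>x. f x + (x$i) *\<^sub>R d = (g x + (x$i) *\<^sub>R d) + f 0"
  proof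
    fix x show "f x + (x$i) *\<^sub>R d = (g x + (x$i) *\<^sub>R d) + f 0"
      using g(2) by (metis add.assoc add.commute)
  qed
  show ?thesis unfolding affine_map_def
    by (rule exI[of _ "\<lambda>x. g x + (x$i) *\<^sub>R d"], rule exI[of _ "f 0"]) (use lin eq in blast)
qed
lemma affine_map_hull:
  assumes "affine_map f" shows "f ` (convex hull S) = convex hull (f ` S)"
proof -
  obtain g b where g: "linear g" "\<And>x. f x = g x + b" using assms unfolding affine_map_def by blast
  have e: "\<And>X. f ` X = (\<lambda>y. b + y) ` (g ` X)" using g(2) by (auto simp: image_iff add.commute)
  have "f ` (convex hull S) = (\<lambda>y. b + y) ` (g ` (convex hull S))" by (rule e)
  also have "\<dots> = (\<lambda>y. b + y) ` (convex hull (g ` S))" by (simp only: convex_hull_linear_image[OF g(1)])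
  also have "\<dots> = convex hull ((\<lambda>y. b + y) ` (g ` S))" by (rule convex_hull_translation[symmetric])
  also have "\<dots> = convex hull (f ` S)" by (simp only: e[symmetric])
  finally show ?thesis .
qed

definition gens :: "(real^'m) set" where
  "gens = range (\<lambda>i. axis i 1) \<union> range (\<lambda>i. - axis i 1)"

lemma finite_gens: "finite gens" unfolding gens_def by simp

lemma diamond_gens: "diamond = convex hull gens" unfolding diamond_def gens_def ..

lemma convex_halfspace_comp_le: "convex {x::real^'m. x$i \<le> c}"
  unfolding convex_def by (simp add: convex_bound_le)

lemma convex_halfspace_comp_ge: "convex {x::real^'m. x$i \<ge> c}"
  unfolding convex_def
proof (intro allI impI ballI, simp)
  fix x y :: "real^'m" and u v :: real
  assume h: "c \<le> x$i" "c \<le> y$i" "0 \<le> u" "0 \<le> v" "u + v = 1"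
  have "u * c \<le> u * (x $ i)" "v * c \<le> v * (y $ i)" using h by (auto intro: mult_left_mono)
  moreover have "c = u * c + v * c" using h(5) by (metis distrib_right mult_1)
  ultimately show "c \<le> u * (x $ i) + v * (y $ i)" by linarith
qed

lemma axis_comp: "(axis j (1::real) :: real^'m) $ i = (if i = j then 1 else 0)"
  unfolding axis_def by simp

lemma vert_diamond: "vert (diamond :: (real^'m) set) = gens"
proof
  show "vert (diamond :: (real^'m) set) \<subseteq> gens"
    unfolding vert_def diamond_gens using extreme_point_of_convex_hull by blast
next
  show "gens \<subseteq> vert (diamond :: (real^'m) set)"
  proof
    fix a :: "real^'m" assume a: "a \<in> gens"
    have ins: "insert a (gens - {a}) = gens" using a by blast
    have "a \<notin> convex hull (gens - {a})"
    proof -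
      from a obtain i where "a = axis i 1 \<or> a = - axis i 1" unfolding gens_def by blast
      then show ?thesis
      proof
        assume ai: "a = axis i 1"
        have "gens - {a} \<subseteq> {x. x$i \<le> 0}"
        proof
          fix x :: "real^'m" assume x: "x \<in> gens - {a}"
          then obtain j where "x = axis j 1 \<or> x = - axis j 1" unfolding gens_def by blast
          then show "x \<in> {x. x$i \<le> 0}" using x ai by (cases "j = i") (auto simp: axis_comp)
        qed
        then have "convex hull (gens - {a}) \<subseteq> {x. x$i \<le> 0}"
          by (intro hull_minimal convex_halfspace_comp_le)
        then show ?thesis using ai by (auto simp: axis_comp)
      next
        assume ai: "a = - axis i 1"
        have "gens - {a} \<subseteq> {x. x$i \<ge> 0}"
        proof
          fix x :: "real^'m" assume x: "x \<in> gens - {a}"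
          then obtain j where "x = axis j 1 \<or> x = - axis j 1" unfolding gens_def by blast
          then show "x \<in> {x. x$i \<ge> 0}" using x ai by (cases "j = i") (auto simp: axis_comp)
        qed
        then have "convex hull (gens - {a}) \<subseteq> {x. x$i \<ge> 0}"
          by (intro hull_minimal convex_halfspace_comp_ge)
        then show ?thesis using ai by (auto simp: axis_comp)
      qed
    qed
    then have "a extreme_point_of convex hull (insert a (gens - {a}))"
      by (intro extreme_point_of_convex_hull_insert) (use finite_gens in auto)
    then show "a \<in> vert diamond" unfolding vert_def diamond_gens ins by simp
  qed
qed

lemma convex_sym:
  assumes "convex P" shows "convex (P \<inter> (\<lambda>x. 2 *\<^sub>R c - x) ` P)"
proof -
  have "(\<lambda>x. 2 *\<^sub>R c - x) ` P = (+) (2 *\<^sub>R c) ` ((\<lambda>x. - x) ` P)" by (auto simp: image_iff)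
  moreover have "convex ((+) (2 *\<^sub>R c) ` ((\<lambda>x. - x) ` P))"
    by (intro convex_translation convex_negations assms)
  ultimately show ?thesis using assms by (simp add: convex_Int)
qed


lemma extreme_sub:
  "x extreme_point_of T \<Longrightarrow> x \<in> S \<Longrightarrow> S \<subseteq> T \<Longrightarrow> x extreme_point_of S"
  unfolding extreme_point_of_def by blast

lemma key:
  fixes f :: "real^'m \<Rightarrow> 'a::real_vector" and s :: real
  assumes fv: "f \<in> vert_hom diamond P" and cP: "convex P" and s: "s = 1 \<or> s = -1"
  shows "f (s *\<^sub>R axis i 1) extreme_point_of (P \<inter> (\<lambda>x. 2 *\<^sub>R f 0 - x) ` P)"
proof -
  have af: "affine_map f" and fP: "f ` diamond \<subseteq> P"
   and V: "\<And>g h u. g\<in>hom_maps diamond P \<Longrightarrow> h\<in>hom_maps diamond P \<Longrightarrow> 0<u \<Longrightarrow> u<1 \<Longrightarrow>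
      (\<forall>x\<in>diamond. f x = (1-u)*\<^sub>R g x + u *\<^sub>R h x) \<Longrightarrow> (\<forall>x\<in>diamond. g x = h x)"
    using fv unfolding vert_hom_def hom_maps_def by blast+
  obtain g b where g: "linear g" "\<And>x. f x = g x + b" using af unfolding affine_map_def by blast
  have g0: "g 0 = 0" by (rule linear_0[OF g(1)])
  have b: "f 0 = b" using g(2)[of 0] g0 by simp
  define p where "p = f (s *\<^sub>R axis i 1)"
  define q where "q = f (- s *\<^sub>R axis i 1)"
  have pq: "p + q = 2 *\<^sub>R b" unfolding p_def q_def g(2)
    by (simp add: linear_scale[OF g(1)] linear_neg[OF g(1)] scaleR_2 algebra_simps)
  have ss: "s * s = 1" using s by auto
  have gd: "gens \<subseteq> diamond" unfolding diamond_gens by (rule hull_subset)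
  have sg: "s *\<^sub>R axis i 1 \<in> gens" "- s *\<^sub>R axis i 1 \<in> gens" using s unfolding gens_def by auto
  hence pP: "p \<in> P" "q \<in> P" using fP gd unfolding p_def q_def by auto
  define F where "F d = (\<lambda>x. f x + (x$i) *\<^sub>R d)" for d
  have Fhom: "F d \<in> hom_maps diamond P" if d1: "p + s *\<^sub>R d \<in> P" and d2: "q - s *\<^sub>R d \<in> P" for d
  proof -
    have aF: "affine_map (F d)" unfolding F_def by (rule affine_map_pert[OF af])
    have "F d ` gens \<subseteq> P"
    proof
      fix y assume "y \<in> F d ` gens"
      then obtain x where x: "x \<in> gens" "y = F d x" by auto
      then obtain j where j: "x = axis j 1 \<or> x = - axis j 1" unfolding gens_def by blast
      show "y \<in> P"
      proof (cases "j = i")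
        case False
        then have "x$i = 0" using j by (auto simp: axis_comp)
        then have "y = f x" using x unfolding F_def by simp
        then show ?thesis using fP gd x by auto
      next
        case True
        from j s show ?thesis
        proof (elim disjE)
          assume "x = axis j 1" "s = 1" then show ?thesis using d1 x True unfolding F_def p_def by simp
        next
          assume "x = axis j 1" "s = -1" then show ?thesis using d2 x True unfolding F_def q_def by simp
        next
          assume "x = - axis j 1" "s = 1" then show ?thesis using d2 x True unfolding F_def q_def by simp
        next
          assume "x = - axis j 1" "s = -1" then show ?thesis using d1 x True unfolding F_def p_def by simp
        qed
      qed
    qed
    then have "convex hull (F d ` gens) \<subseteq> P" using cP by (rule hull_minimal)
    then have "F d ` diamond \<subseteq> P" unfolding diamond_gens affine_map_hull[OF aF] .
    then show ?thesis using aF unfolding hom_maps_def by blast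
  qed
  have pe: "p = 2 *\<^sub>R b - q" using pq by (metis add_diff_cancel_right')
  show ?thesis
    unfolding extreme_point_of_def p_def[symmetric] b
  proof (intro conjI ballI)
    show "p \<in> P \<inter> (\<lambda>x. 2 *\<^sub>R b - x) ` P" using pP pe by blast
    fix a c assume a: "a \<in> P \<inter> (\<lambda>x. 2 *\<^sub>R b - x) ` P" and c: "c \<in> P \<inter> (\<lambda>x. 2 *\<^sub>R b - x) ` P"
    show "p \<notin> open_segment a c"
    proof
      assume "p \<in> open_segment a c"
      then obtain u where ac: "a \<noteq> c" "0<u" "u<1" "p = (1-u)*\<^sub>R a + u*\<^sub>R c" by (auto simp: in_segment)
      from a obtain a' where aa: "a \<in> P" "a' \<in> P" "a = 2*\<^sub>R b - a'" by auto
      from c obtain c' where cc: "c \<in> P" "c' \<in> P" "c = 2*\<^sub>R b - c'" by auto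
      define da where "da = s *\<^sub>R (a - p)"
      define dc where "dc = s *\<^sub>R (c - p)"
      have sda: "s *\<^sub>R da = a - p" unfolding da_def using ss by simp
      have sdc: "s *\<^sub>R dc = c - p" unfolding dc_def using ss by simp
      have Fa: "F da \<in> hom_maps diamond P"
      proof (rule Fhom)
        show "p + s *\<^sub>R da \<in> P" using sda aa by simp
        have "q - s *\<^sub>R da = a'" unfolding sda using pe aa(3) by (simp add: algebra_simps)
        then show "q - s *\<^sub>R da \<in> P" using aa by simp
      qed
      have Fc: "F dc \<in> hom_maps diamond P"
      proof (rule Fhom)
        show "p + s *\<^sub>R dc \<in> P" using sdc cc by simp
        have "q - s *\<^sub>R dc = c'" unfolding sdc using pe cc(3) by (simp add: algebra_simps)
        then show "q - s *\<^sub>R dc \<in> P" using cc by simp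
      qed
      have z0: "(1-u) *\<^sub>R (a - p) + u *\<^sub>R (c - p) = 0" using ac(4) by (simp add: algebra_simps)
      have z: "(1-u) *\<^sub>R da + u *\<^sub>R dc = 0"
      proof -
        have "(1-u) *\<^sub>R da + u *\<^sub>R dc = s *\<^sub>R ((1-u) *\<^sub>R (a - p) + u *\<^sub>R (c - p))"
          unfolding da_def dc_def by (simp add: algebra_simps)
        then show ?thesis using z0 by simp
      qed
      have comb: "\<forall>x\<in>diamond. f x = (1-u)*\<^sub>R F da x + u *\<^sub>R F dc x"
      proof
        fix x :: "real^'m"
        have "(1-u)*\<^sub>R F da x + u *\<^sub>R F dc x = f x + (x$i) *\<^sub>R ((1-u) *\<^sub>R da + u *\<^sub>R dc)"
          unfolding F_def by (simp add: algebra_simps)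
        then show "f x = (1-u)*\<^sub>R F da x + u *\<^sub>R F dc x" using z by simp
      qed
      have "\<forall>x\<in>diamond. F da x = F dc x" by (rule V[OF Fa Fc ac(2) ac(3) comb])
      then have "F da (s *\<^sub>R axis i 1) = F dc (s *\<^sub>R axis i 1)" using sg gd by blast
      then have "s *\<^sub>R da = s *\<^sub>R dc" unfolding F_def by simp
      then have "a = c" using sda sdc by simp
      then show False using ac(1) by simp
    qed
  qed
qed

theorem corollary3p2:
  fixes P :: "'a::euclidean_space set" and R Q :: "'b::euclidean_space set"
  assumes "polytope P" and "polytope R" and "polytope Q" and "R \<subseteq> Q"
    and "CARD('m::finite) \<ge> 2"
  shows "(\<forall>f. f \<in> vert_hom P Q \<and> f ` P \<subseteq> R \<longrightarrow> f \<in> vert_hom P R)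
    \<and> (\<forall>f :: real^'m \<Rightarrow> 'a. f \<in> vert_hom diamond P \<and> centrally_symmetric_about (f 0) P
          \<longrightarrow> f ` vert diamond \<subseteq> vert P)
    \<and> (\<forall>f :: real^'m \<Rightarrow> 'a. f \<in> vert_hom diamond P
          \<longrightarrow> f ` vert diamond = vert (f ` diamond)
            \<and> vert (f ` diamond) \<subseteq> vert (P \<inter> (\<lambda>x. 2 *\<^sub>R f 0 - x) ` P))"
proof (intro conjI allI impI)
  fix f :: "'a \<Rightarrow> 'b"
  assume h: "f \<in> vert_hom P Q \<and> f ` P \<subseteq> R"
  have sub: "hom_maps P R \<subseteq> hom_maps P Q" using assms(4) unfolding hom_maps_def by blast
  have fR: "f \<in> hom_maps P R" using h unfolding vert_hom_def hom_maps_def by blast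
  show "f \<in> vert_hom P R" using h sub fR unfolding vert_hom_def by blast
next
  have cP: "convex P" using assms(1) by (rule polytope_imp_convex)
  have K: "f ` gens \<subseteq> vert (P \<inter> (\<lambda>x. 2 *\<^sub>R f 0 - x) ` P)" if fv: "f \<in> vert_hom diamond P"
    for f :: "real^'m \<Rightarrow> 'a"
  proof
    fix y assume "y \<in> f ` gens"
    then obtain i s where "y = f (s *\<^sub>R axis i 1)" "s = 1 \<or> s = -1"
      unfolding gens_def by (auto, metis scaleR_one, metis scaleR_minus1_left)
    then show "y \<in> vert (P \<inter> (\<lambda>x. 2 *\<^sub>R f 0 - x) ` P)"
      using key[OF fv cP] unfolding vert_def by blast
  qed
  {
    fix f :: "real^'m \<Rightarrow> 'a"
    assume h: "f \<in> vert_hom diamond P \<and> centrally_symmetric_about (f 0) P"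
    have "P \<inter> (\<lambda>x. 2 *\<^sub>R f 0 - x) ` P = P"
    proof
      show "P \<subseteq> P \<inter> (\<lambda>x. 2 *\<^sub>R f 0 - x) ` P"
      proof
        fix x assume x: "x \<in> P"
        have "2 *\<^sub>R f 0 - x \<in> P" using h x unfolding centrally_symmetric_about_def by blast
        moreover have "x = 2 *\<^sub>R f 0 - (2 *\<^sub>R f 0 - x)" by simp
        ultimately show "x \<in> P \<inter> (\<lambda>x. 2 *\<^sub>R f 0 - x) ` P" using x by blast
      qed
    qed blast
    then show "f ` vert diamond \<subseteq> vert P" using K[of f] h unfolding vert_diamond by simp
  }
  {
    fix f :: "real^'m \<Rightarrow> 'a"
    assume fv: "f \<in> vert_hom diamond P"
    let ?T = "P \<inter> (\<lambda>x. 2 *\<^sub>R f 0 - x) ` P"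
    have af: "affine_map f" using fv unfolding vert_hom_def hom_maps_def by blast
    have hull: "f ` diamond = convex hull (f ` gens)" unfolding diamond_gens by (rule affine_map_hull[OF af])
    have KT: "f ` gens \<subseteq> vert ?T" by (rule K[OF fv])
    have "f ` gens \<subseteq> ?T" using KT unfolding vert_def extreme_point_of_def by blast
    then have sT: "f ` diamond \<subseteq> ?T" unfolding hull using convex_sym[OF cP] by (rule hull_minimal)
    have v1: "vert (f ` diamond) \<subseteq> f ` gens"
      unfolding hull vert_def using extreme_point_of_convex_hull by blast
    have v2: "f ` gens \<subseteq> vert (f ` diamond)"
    proof
      fix y assume y: "y \<in> f ` gens"
      have "y \<in> f ` diamond" using y unfolding hull by (rule hull_inc)
      moreover have "y extreme_point_of ?T" using KT y unfolding vert_def by blast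
      ultimately show "y \<in> vert (f ` diamond)" unfolding vert_def using sT extreme_sub by blast
    qed
    show "f ` vert diamond = vert (f ` diamond)" unfolding vert_diamond using v1 v2 by blast
    show "vert (f ` diamond) \<subseteq> vert ?T" using v1 KT by blast
  }
qed

end
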